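(* For every instance $(A,C,k)$ there exist committees $W$ and $W'$, each with representation ratio at least $\frac34$, such that $W$ satisfies EJR+ and $W'$ satisfies FJR.
   Context: An instance $(A,C,k)$ consists of a finite nonempty candidate set $C$, voters $N=\{1,\dots,n\}$, approval sets $A_i\subseteq C$, and a committee size $1\le k\le|C|$. A committee is $W\subseteq C$ with $|W|\le k$. $\mathrm{cov}(W)=|\{i: A_i\cap W\ne\emptyset\}|$; the representation ratio is $\mathrm{cov}(W)/\max\{\mathrm{cov}(W'):|W'|=k\}$. $W$ satisfies EJR+ if for every $\ell\in\{1,\dots,k\}$ and every $N'\subseteq N$ with $|N'|\ge\ell n/k$ and $\bigcap_{i\in N'}A_i\ne\emptyset$, either some $i\in N'$ has $|A_i\cap W|\ge\ell$ or $\bigcap_{i\in N'}A_i\subseteq W$. (Fully justified representation) For a positive integer $\beta$ and $T\subseteq C$, a group $S\subseteq N$ is weakly $(\beta,T)$-cohesive if $|S|\ge |T|\frac{n}{k}$ and $|A_i\cap T|\ge\beta$ for all $i\in S$; $W$ satisfies FJR if for every such $\beta,T$ and every weakly $(\beta,T)$-cohesive group $S$ there is $i\in S$ with $|A_i\cap W|\ge\beta$. *)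

theory Defs
  imports Complex_Main
begin

definition is_instance :: "'c set \<Rightarrow> nat \<Rightarrow> (nat \<Rightarrow> 'c set) \<Rightarrow> nat \<Rightarrow> bool" where
  "is_instance C n A k \<longleftrightarrow> finite C \<and> C \<noteq> {} \<and> (\<forall>i\<in>{1..n}. A i \<subseteq> C) \<and> 1 \<le> k \<and> k \<le> card C"

definition is_committee :: "'c set \<Rightarrow> nat \<Rightarrow> 'c set \<Rightarrow> bool" where
  "is_committee C k W \<longleftrightarrow> W \<subseteq> C \<and> card W \<le> k"

definition cov :: "nat \<Rightarrow> (nat \<Rightarrow> 'c set) \<Rightarrow> 'c set \<Rightarrow> nat" where
  "cov n A W = card {i \<in> {1..n}. A i \<inter> W \<noteq> {}}"

definition max_cov :: "'c set \<Rightarrow> nat \<Rightarrow> (nat \<Rightarrow> 'c set) \<Rightarrow> nat \<Rightarrow> nat" where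
  "max_cov C n A k = Max {cov n A W' | W'. W' \<subseteq> C \<and> card W' = k}"

text \<open>Representation ratio; convention: ratio 1 if the optimal coverage is 0 (then 0/0).\<close>
definition rep_ratio :: "'c set \<Rightarrow> nat \<Rightarrow> (nat \<Rightarrow> 'c set) \<Rightarrow> nat \<Rightarrow> 'c set \<Rightarrow> real" where
  "rep_ratio C n A k W =
     (if max_cov C n A k = 0 then 1 else real (cov n A W) / real (max_cov C n A k))"

definition EJR_plus :: "nat \<Rightarrow> (nat \<Rightarrow> 'c set) \<Rightarrow> nat \<Rightarrow> 'c set \<Rightarrow> bool" where
  "EJR_plus n A k W \<longleftrightarrow>
     (\<forall>l\<in>{1..k}. \<forall>N'. N' \<subseteq> {1..n} \<and> N' \<noteq> {} \<and>
        real (card N') \<ge> real l * real n / real k \<and> (\<Inter>i\<in>N'. A i) \<noteq> {} \<longrightarrow>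
        (\<exists>i\<in>N'. card (A i \<inter> W) \<ge> l) \<or> (\<Inter>i\<in>N'. A i) \<subseteq> W)"

definition weakly_cohesive :: "nat \<Rightarrow> (nat \<Rightarrow> 'c set) \<Rightarrow> nat \<Rightarrow> nat \<Rightarrow> 'c set \<Rightarrow> nat set \<Rightarrow> bool" where
  "weakly_cohesive n A k \<beta> T S \<longleftrightarrow>
     real (card S) \<ge> real (card T) * real n / real k \<and> (\<forall>i\<in>S. card (A i \<inter> T) \<ge> \<beta>)"

definition FJR :: "'c set \<Rightarrow> nat \<Rightarrow> (nat \<Rightarrow> 'c set) \<Rightarrow> nat \<Rightarrow> 'c set \<Rightarrow> bool" where
  "FJR C n A k W \<longleftrightarrow>
     (\<forall>\<beta> T S. \<beta> \<ge> 1 \<and> T \<subseteq> C \<and> S \<subseteq> {1..n} \<and> S \<noteq> {} \<and> weakly_cohesive n A k \<beta> T S \<longrightarrow>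
        (\<exists>i\<in>S. card (A i \<inter> W) \<ge> \<beta>))"

end

theory Submission
  imports Defs
begin


definition gcov :: "nat set \<Rightarrow> (nat \<Rightarrow> 'c set) \<Rightarrow> 'c set \<Rightarrow> nat" where
  "gcov U A F = card {i\<in>U. A i \<inter> F \<noteq> {}}"

lemma drop_one:
  assumes U: "finite U" and B: "finite B" "B \<noteq> {}"
  shows "\<exists>x\<in>B. real (card B - 1) * real (gcov U A B) \<le> real (gcov U A (B - {x})) * real (card B)"
proof (rule ccontr)
  assume H: "\<not> ?thesis"
  define u where "u x = {i\<in>U. A i \<inter> B \<noteq> {} \<and> A i \<inter> (B - {x}) = {}}" for x
  have spl: "gcov U A B = gcov U A (B - {x}) + card (u x)" for x
  proof -
    have e: "{i\<in>U. A i \<inter> B \<noteq> {}} = {i\<in>U. A i \<inter> (B - {x}) \<noteq> {}} \<union> u x"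
      unfolding u_def by blast
    have d: "{i\<in>U. A i \<inter> (B - {x}) \<noteq> {}} \<inter> u x = {}" unfolding u_def by blast
    show ?thesis unfolding gcov_def e
      by (rule card_Un_disjoint) (use U d in \<open>auto simp: u_def\<close>)
  qed
  have dis: "u x \<inter> u y = {}" if "x \<noteq> y" for x y
    using that unfolding u_def by blast
  have "(\<Sum>x\<in>B. card (u x)) = card (\<Union>x\<in>B. u x)"
    by (rule card_UN_disjoint[symmetric]) (use B U dis in \<open>auto simp: u_def\<close>)
  also have "\<dots> \<le> gcov U A B" unfolding gcov_def
    by (rule card_mono) (use U in \<open>auto simp: u_def\<close>)
  finally have su: "(\<Sum>x\<in>B. real (card (u x))) \<le> real (gcov U A B)"
    by (metis of_nat_le_iff of_nat_sum)
  have m0: "card B > 0" using B by (simp add: card_gt_0_iff)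
  have lt: "real (gcov U A B) < real (card B) * real (card (u x))" if "x \<in> B" for x
  proof -
    have "real (gcov U A (B - {x})) * real (card B) < real (card B - 1) * real (gcov U A B)"
      using H that by force
    then have "(real (gcov U A B) - card (u x)) * real (card B) < (real (card B) - 1) * real (gcov U A B)"
      using spl[of x] m0 by (simp add: of_nat_diff)
    then show ?thesis by (simp add: algebra_simps)
  qed
  have "(\<Sum>x\<in>B. real (gcov U A B)) < (\<Sum>x\<in>B. real (card B) * real (card (u x)))"
    by (rule sum_strict_mono) (use B lt in auto)
  also have "\<dots> = real (card B) * (\<Sum>x\<in>B. real (card (u x)))" by (simp add: sum_distrib_left)
  also have "\<dots> \<le> real (card B) * real (gcov U A B)" using su by (simp add: mult_left_mono)
  finally show False by simp
qed

lemma avg_aux: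
  assumes U: "finite U"
  shows "\<forall>B. finite B \<and> card B = f + d \<longrightarrow> (\<exists>F\<subseteq>B. card F = f \<and> real f * real (gcov U A B) \<le> real (gcov U A F) * real (card B))"
proof (induction d)
  case 0
  then show ?case by auto
next
  case (Suc d)
  show ?case
  proof (intro allI impI)
    fix B :: "'a set" assume B: "finite B \<and> card B = f + Suc d"
    show "\<exists>F\<subseteq>B. card F = f \<and> real f * real (gcov U A B) \<le> real (gcov U A F) * real (card B)"
    proof (cases "f = 0")
      case True then show ?thesis by (intro exI[of _ "{}"]) auto
    next
      case False
      have ne: "B \<noteq> {}" using B by auto
      obtain x where x: "x \<in> B" and hx: "real (card B - 1) * real (gcov U A B) \<le> real (gcov U A (B - {x})) * real (card B)"
        using drop_one[OF U _ ne, of A] B by auto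
      have c1: "card (B - {x}) = f + d" using B x by simp
      obtain F where F: "F \<subseteq> B - {x}" "card F = f" and hF: "real f * real (gcov U A (B - {x})) \<le> real (gcov U A F) * real (f + d)"
        using Suc.IH B c1 by (metis finite_Diff)
      have pos: "real (f + d) > 0" using False by simp
      have "real f * real (gcov U A B) * real (f + d) = real f * (real (card B - 1) * real (gcov U A B))"
        using B by simp
      also have "\<dots> \<le> real f * (real (gcov U A (B - {x})) * real (card B))"
        using hx by (simp add: mult_left_mono)
      also have "\<dots> = (real f * real (gcov U A (B - {x}))) * real (card B)" by simp
      also have "\<dots> \<le> (real (gcov U A F) * real (f + d)) * real (card B)"
        using hF by (simp add: mult_right_mono)
      finally have "real f * real (gcov U A B) * real (f + d) \<le> real (gcov U A F) * real (card B) * real (f + d)"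
        by (simp add: algebra_simps)
      then have "real f * real (gcov U A B) \<le> real (gcov U A F) * real (card B)"
        using pos by simp
      then show ?thesis using F by blast
    qed
  qed
qed

lemma avg:
  assumes "finite U" "finite B" "f \<le> card B"
  shows "\<exists>F\<subseteq>B. card F = f \<and> real f * real (gcov U A B) \<le> real (gcov U A F) * real (card B)"
  using avg_aux[OF assms(1), of f "card B - f" A] assms by auto

lemma cov_le: "cov n A W \<le> n"
proof -
  have "cov n A W \<le> card {1..n}" unfolding cov_def by (rule card_mono) auto
  then show ?thesis by simp
qed

lemma arith_final:
  fixes a k n w oo x y :: real
  assumes k: "k > 0" and a: "0 \<le> a" "a \<le> k" and x: "(k - a) * y \<le> x * k"
    and p: "a * n \<le> k * w" and y: "oo - w \<le> y" and on: "oo \<le> n" and oo: "oo > 0" and w: "0 \<le> w" and wo: "w < oo"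
  shows "3 / 4 * oo \<le> w + x"
proof -
  have n: "n > 0" using on oo by simp
  have y0: "0 \<le> y" using y wo by simp
  have s1: "(k - a) / k * y \<le> x" using x k by (simp add: field_simps)
  have s2: "(n - w) / n \<le> (k - a) / k"
  proof -
    have "a / k \<le> w / n" using p k n by (simp add: field_simps)
    then have "1 - w / n \<le> 1 - a / k" by simp
    then show ?thesis using k n by (simp add: diff_divide_distrib)
  qed
  have s3: "(oo - w) / oo \<le> (n - w) / n"
  proof -
    have "w / n \<le> w / oo" using on oo w by (simp add: frac_le)
    then have "1 - w / oo \<le> 1 - w / n" by simp
    then show ?thesis using oo n by (simp add: diff_divide_distrib)
  qed
  have q0: "0 \<le> (oo - w) / oo" using wo oo by simp
  have "(oo - w) / oo * (oo - w) \<le> (k - a) / k * y"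
    by (rule mult_mono) (use s2 s3 y q0 y0 wo in auto)
  then have xx: "(oo - w) / oo * (oo - w) \<le> x" using s1 by linarith
  have "3 / 4 * oo \<le> w + (oo - w) / oo * (oo - w)"
  proof -
    have "0 \<le> (oo - 2 * w)^2 / oo" using oo by simp
    also have "(oo - 2 * w)^2 / oo = 4 * (w + (oo - w) / oo * (oo - w)) - 3 * oo"
      using oo by (simp add: field_simps power2_eq_square)
    finally show ?thesis by (simp add: algebra_simps)
  qed
  then show ?thesis using xx by linarith
qed

lemma extend:
  assumes inst: "is_instance C n A k" and W: "W \<subseteq> C" "card W \<le> k"
    and pay: "real (card W) * real n \<le> real k * real (cov n A W)"
  shows "\<exists>W'. W \<subseteq> W' \<and> is_committee C k W' \<and> rep_ratio C n A k W' \<ge> 3/4"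
proof -
  have fC: "finite C" and k1: "1 \<le> k" and kC: "k \<le> card C" using inst by (auto simp: is_instance_def)
  have fW: "finite W" using W fC finite_subset by blast
  define S where "S = {W'. W' \<subseteq> C \<and> card W' = k}"
  have Seq: "{cov n A W' | W'. W' \<subseteq> C \<and> card W' = k} = cov n A ` S" unfolding S_def by auto
  have fS: "finite S" unfolding S_def using fC by simp
  obtain B0 where "B0 \<subseteq> C" "card B0 = k" using kC obtain_subset_with_card_n by metis
  then have neS: "S \<noteq> {}" unfolding S_def by auto
  define oo where "oo = max_cov C n A k"
  have oeq: "oo = Max (cov n A ` S)" unfolding oo_def max_cov_def Seq by simp
  show ?thesis
  proof (cases "oo = 0")
    case True
    then show ?thesis using W by (intro exI[of _ W]) (auto simp: is_committee_def rep_ratio_def oo_def)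
  next
    case False
    have "oo \<in> cov n A ` S" unfolding oeq by (rule Max_in) (use fS neS in auto)
    then obtain B where B: "B \<subseteq> C" "card B = k" and oB: "cov n A B = oo" unfolding S_def by auto
    have fB: "finite B" using B fC finite_subset by blast
    define U where "U = {i\<in>{1..n}. A i \<inter> W = {}}"
    have fU: "finite U" unfolding U_def by simp
    obtain F where F: "F \<subseteq> B" "card F = k - card W"
      and hF: "real (k - card W) * real (gcov U A B) \<le> real (gcov U A F) * real (card B)"
      using avg[OF fU fB, of "k - card W" A] B by auto
    define W' where "W' = W \<union> F"
    have fF: "finite F" using F fB finite_subset by blast
    have cW': "card W' \<le> k" unfolding W'_def using card_Un_le[of W F] F W by simp
    have sW': "W' \<subseteq> C" unfolding W'_def using W F B by auto
    have c1: "cov n A W + gcov U A F \<le> cov n A W'"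
    proof -
      have "cov n A W + gcov U A F = card ({i\<in>{1..n}. A i \<inter> W \<noteq> {}} \<union> {i\<in>U. A i \<inter> F \<noteq> {}})"
        unfolding cov_def gcov_def
        by (rule card_Un_disjoint[symmetric]) (auto simp: U_def)
      also have "\<dots> \<le> cov n A W'" unfolding cov_def
        by (rule card_mono) (auto simp: U_def W'_def)
      finally show ?thesis .
    qed
    have c2: "oo \<le> cov n A W + gcov U A B"
    proof -
      have "oo \<le> card ({i\<in>{1..n}. A i \<inter> W \<noteq> {}} \<union> {i\<in>U. A i \<inter> B \<noteq> {}})"
        unfolding oB[symmetric] cov_def
        by (rule card_mono) (auto simp: U_def)
      also have "\<dots> \<le> cov n A W + gcov U A B" unfolding cov_def gcov_def by (rule card_Un_le)
      finally show ?thesis .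
    qed
    have on: "oo \<le> n" using oB cov_le by metis
    have rr: "rep_ratio C n A k W' = real (cov n A W') / real oo"
      using False unfolding rep_ratio_def oo_def by simp
    have "3 / 4 * real oo \<le> real (cov n A W')"
    proof (cases "cov n A W \<ge> oo")
      case True then show ?thesis using c1 by linarith
    next
      case False2: False
      have "3 / 4 * real oo \<le> real (cov n A W) + real (gcov U A F)"
        apply (rule arith_final[where k = "real k" and a = "real (card W)" and n = "real n" and y = "real (gcov U A B)"])
        using k1 W hF B pay c2 on False False2 by (auto simp: of_nat_diff)
      then show ?thesis using c1 by linarith
    qed
    then have "3/4 \<le> rep_ratio C n A k W'" unfolding rr using False by (simp add: field_simps)
    then show ?thesis using sW' cW' by (intro exI[of _ W']) (auto simp: is_committee_def W'_def)
  qed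
qed



lemma pay_bound:
  fixes p :: "nat \<Rightarrow> 'c \<Rightarrow> real"
  assumes fW: "finite W" and k: "k > 0" and nonneg: "\<forall>i c. 0 \<le> p i c"
    and supp: "\<forall>i c. p i c \<noteq> 0 \<longrightarrow> i \<in> {1..n} \<and> c \<in> W \<and> A i \<inter> W \<noteq> {}"
    and spend: "\<forall>i. (\<Sum>c\<in>W. p i c) \<le> 1"
    and coll: "\<forall>c\<in>W. real n / real k \<le> (\<Sum>i\<in>{1..n}. p i c)"
  shows "real (card W) * real n \<le> real k * real (cov n A W)"
proof -
  define Cv where "Cv = {i\<in>{1..n}. A i \<inter> W \<noteq> {}}"
  have "real (card W) * (real n / real k) = (\<Sum>c\<in>W. real n / real k)" by simp
  also have "\<dots> \<le> (\<Sum>c\<in>W. \<Sum>i\<in>{1..n}. p i c)" by (rule sum_mono) (use coll in auto)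
  also have "\<dots> = (\<Sum>i\<in>{1..n}. \<Sum>c\<in>W. p i c)" by (rule sum.swap)
  also have "\<dots> = (\<Sum>i\<in>Cv. \<Sum>c\<in>W. p i c)"
  proof (rule sum.mono_neutral_right)
    show "\<forall>i\<in>{1..n} - Cv. (\<Sum>c\<in>W. p i c) = 0"
    proof
      fix i assume "i \<in> {1..n} - Cv"
      then have "A i \<inter> W = {}" unfolding Cv_def by auto
      then have "\<forall>c. p i c = 0" using supp by blast
      then show "(\<Sum>c\<in>W. p i c) = 0" by simp
    qed
  qed (auto simp: Cv_def)
  also have "\<dots> \<le> (\<Sum>i\<in>Cv. 1)" by (rule sum_mono) (use spend in auto)
  also have "\<dots> = real (cov n A W)" by (simp add: Cv_def cov_def)
  finally have "real (card W) * (real n / real k) \<le> real (cov n A W)" .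
  then show ?thesis using k by (simp add: field_simps)
qed

definition viol_ejr :: "nat \<Rightarrow> (nat \<Rightarrow> 'c set) \<Rightarrow> nat \<Rightarrow> 'c set \<Rightarrow> nat \<Rightarrow> nat set \<Rightarrow> 'c \<Rightarrow> bool" where
  "viol_ejr n A k W l N c \<longleftrightarrow> l \<in> {1..k} \<and> N \<subseteq> {1..n} \<and> N \<noteq> {} \<and>
     real (card N) \<ge> real l * real n / real k \<and> (\<forall>i\<in>N. c \<in> A i) \<and> c \<notin> W \<and> (\<forall>i\<in>N. card (A i \<inter> W) < l)"

definition inv_ejr :: "'c set \<Rightarrow> nat \<Rightarrow> (nat \<Rightarrow> 'c set) \<Rightarrow> nat \<Rightarrow> 'c set \<Rightarrow> bool" where
  "inv_ejr C n A k W \<longleftrightarrow> W \<subseteq> C \<and> (\<exists>p::nat \<Rightarrow> 'c \<Rightarrow> real. (\<forall>i c. 0 \<le> p i c) \<and>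
     (\<forall>i c. p i c \<noteq> 0 \<longrightarrow> i \<in> {1..n} \<and> c \<in> W \<and> c \<in> A i) \<and>
     (\<forall>i. (\<Sum>c\<in>W. p i c) \<le> 1) \<and> (\<forall>c\<in>W. real n / real k \<le> (\<Sum>i\<in>{1..n}. p i c)) \<and>
     (\<forall>i c l N d. viol_ejr n A k W l N d \<longrightarrow> p i c \<le> 1 / real l))"

lemma viol_ejr_mono:
  assumes "viol_ejr n A k (insert c W) l N d" "finite W"
  shows "viol_ejr n A k W l N d"
proof -
  have "card (A i \<inter> W) \<le> card (A i \<inter> insert c W)" for i
    by (rule card_mono) (use assms(2) in auto)
  then show ?thesis using assms(1) unfolding viol_ejr_def by (meson insertCI le_less_trans)
qed

lemma ejr_viol:
  assumes "\<forall>l N c. \<not> viol_ejr n A k W l N c"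
  shows "EJR_plus n A k W"
  unfolding EJR_plus_def
proof (intro ballI allI impI)
  fix l N assume l: "l \<in> {1..k}" and h: "N \<subseteq> {1..n} \<and> N \<noteq> {} \<and>
        real (card N) \<ge> real l * real n / real k \<and> (\<Inter>i\<in>N. A i) \<noteq> {}"
  show "(\<exists>i\<in>N. card (A i \<inter> W) \<ge> l) \<or> (\<Inter>i\<in>N. A i) \<subseteq> W"
  proof (rule ccontr)
    assume H: "\<not> ((\<exists>i\<in>N. card (A i \<inter> W) \<ge> l) \<or> (\<Inter>i\<in>N. A i) \<subseteq> W)"
    then have h2: "\<forall>i\<in>N. card (A i \<inter> W) < l" by (simp add: not_le)
    have h3: "\<not> (\<Inter>i\<in>N. A i) \<subseteq> W" using H by simp
    then obtain c where c: "c \<in> (\<Inter>i\<in>N. A i)" "c \<notin> W" by (meson subsetI)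
    have "\<forall>i\<in>N. c \<in> A i" using c(1) by simp
    then have "viol_ejr n A k W l N c" unfolding viol_ejr_def using h h2 l c(2) by simp
    then show False using assms by blast
  qed
qed

lemma ejr_step:
  assumes inst: "is_instance C n A k" and I: "inv_ejr C n A k W" and v: "viol_ejr n A k W l N c"
    and mx: "\<forall>l' N' d. viol_ejr n A k W l' N' d \<longrightarrow> l' \<le> l"
  shows "inv_ejr C n A k (insert c W)"
proof -
  have fC: "finite C" and k1: "1 \<le> k" and AC: "\<forall>i\<in>{1..n}. A i \<subseteq> C" using inst by (auto simp: is_instance_def)
  obtain p where WC: "W \<subseteq> C" and nonneg: "\<forall>i c. 0 \<le> p i c"
    and supp: "\<forall>i c. p i c \<noteq> 0 \<longrightarrow> i \<in> {1..n} \<and> c \<in> W \<and> c \<in> A i"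
    and spend: "\<forall>i. (\<Sum>c\<in>W. p i c) \<le> 1" and coll: "\<forall>c\<in>W. real n / real k \<le> (\<Sum>i\<in>{1..n}. p i c)"
    and lev: "\<forall>i c l N d. viol_ejr n A k W l N d \<longrightarrow> p i c \<le> 1 / real l"
    using I unfolding inv_ejr_def by (elim conjE exE) (rule that; assumption)
  have fW: "finite W" using WC fC finite_subset by blast
  have l1: "1 \<le> l" and lk: "l \<le> k" and NV: "N \<subseteq> {1..n}" and Nne: "N \<noteq> {}"
    and Nc: "real l * real n / real k \<le> real (card N)" and cA: "\<forall>i\<in>N. c \<in> A i" and cW: "c \<notin> W"
    and Nl: "\<forall>i\<in>N. card (A i \<inter> W) < l"
    using v unfolding viol_ejr_def by auto
  have fN: "finite N" using NV finite_subset by blast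
  have cN: "card N > 0" using fN Nne by (simp add: card_gt_0_iff)
  obtain i0 where "i0 \<in> N" using Nne by blast
  then have cC: "c \<in> C" using cA NV AC by blast
  define q where "q = real n / (real k * real (card N))"
  have q0: "0 \<le> q" unfolding q_def by simp
  have ql: "q \<le> 1 / real l"
  proof -
    have "real l * real n \<le> real k * real (card N)" using Nc k1 by (simp add: field_simps)
    then have "real n / (real k * real (card N)) * real l \<le> 1" using k1 cN by (simp add: field_simps)
    then show ?thesis unfolding q_def using l1 by (simp add: field_simps)
  qed
  have pc: "p i c = 0" for i using supp cW by blast
  define p' where "p' i d = (if d = c \<and> i \<in> N then q else p i d)" for i d
  have s1: "\<forall>i d. 0 \<le> p' i d" unfolding p'_def using nonneg q0 by auto
  have s2: "\<forall>i d. p' i d \<noteq> 0 \<longrightarrow> i \<in> {1..n} \<and> d \<in> insert c W \<and> d \<in> A i"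
    unfolding p'_def using supp NV cA by auto
  have sumW: "(\<Sum>d\<in>W. p' i d) = (\<Sum>d\<in>W. p i d)" for i
    by (rule sum.cong) (use cW in \<open>auto simp: p'_def\<close>)
  have s3: "\<forall>i. (\<Sum>d\<in>insert c W. p' i d) \<le> 1"
  proof
    fix i
    have e: "(\<Sum>d\<in>insert c W. p' i d) = p' i c + (\<Sum>d\<in>W. p i d)"
      using fW cW sumW by simp
    show "(\<Sum>d\<in>insert c W. p' i d) \<le> 1"
    proof (cases "i \<in> N")
      case False
      then show ?thesis unfolding e using spend pc by (simp add: p'_def)
    next
      case True
      have "(\<Sum>d\<in>W. p i d) = (\<Sum>d\<in>A i \<inter> W. p i d)"
        by (rule sum.mono_neutral_right) (use fW supp in auto)
      also have "\<dots> \<le> real (card (A i \<inter> W)) * (1 / real l)"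
        by (rule sum_bounded_above) (rule lev[rule_format, OF v])
      also have "\<dots> \<le> (real l - 1) * (1 / real l)"
      proof -
        have "card (A i \<inter> W) \<le> l - 1" using Nl True by fastforce
        then have "real (card (A i \<inter> W)) \<le> real l - 1" using l1 by linarith
        then show ?thesis using l1 by (simp add: divide_right_mono)
      qed
      finally have "(\<Sum>d\<in>W. p i d) \<le> (real l - 1) * (1 / real l)" .
      moreover have "p' i c = q" using True by (simp add: p'_def)
      ultimately have "(\<Sum>d\<in>insert c W. p' i d) \<le> (real l - 1) * (1 / real l) + 1 / real l"
        unfolding e using ql by linarith
      also have "\<dots> = 1" using l1 by (simp add: field_simps)
      finally show ?thesis .
    qed
  qed
  have s4: "\<forall>d\<in>insert c W. real n / real k \<le> (\<Sum>i\<in>{1..n}. p' i d)"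
  proof
    fix d assume d: "d \<in> insert c W"
    show "real n / real k \<le> (\<Sum>i\<in>{1..n}. p' i d)"
    proof (cases "d = c")
      case True
      have "(\<Sum>i\<in>{1..n}. p' i d) = (\<Sum>i\<in>{1..n}. if i \<in> N then q else 0)"
        by (rule sum.cong) (auto simp: p'_def True pc)
      also have "\<dots> = (\<Sum>i\<in>N. q)"
        by (subst sum.If_cases) (use NV in \<open>auto simp: Int_absorb1\<close>)
      also have "\<dots> = real n / real k" unfolding q_def using cN by simp
      finally show ?thesis by simp
    next
      case False
      then have "d \<in> W" using d by simp
      moreover have "(\<Sum>i\<in>{1..n}. p' i d) = (\<Sum>i\<in>{1..n}. p i d)"
        by (rule sum.cong) (auto simp: p'_def False)
      ultimately show ?thesis using coll by simp
    qed
  qed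
  have s5: "\<forall>i d l' N' e. viol_ejr n A k (insert c W) l' N' e \<longrightarrow> p' i d \<le> 1 / real l'"
  proof (intro allI impI)
    fix i d l' N' e assume "viol_ejr n A k (insert c W) l' N' e"
    then have v': "viol_ejr n A k W l' N' e" using viol_ejr_mono[OF _ fW] by blast
    then have "l' \<le> l" "1 \<le> l'" using mx unfolding viol_ejr_def by auto
    then have "1 / real l \<le> 1 / real l'" by (simp add: frac_le)
    moreover have "p i d \<le> 1 / real l'" using lev v' by blast
    ultimately show "p' i d \<le> 1 / real l'" unfolding p'_def using ql by auto
  qed
  have "insert c W \<subseteq> C" using WC cC by blast
  then show ?thesis unfolding inv_ejr_def
    apply (intro conjI)
     apply assumption
    apply (rule exI[of _ p'])
    by (rule conjI[OF s1 conjI[OF s2 conjI[OF s3 conjI[OF s4 s5]]]])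
qed



lemma ejr_exists:
  assumes inst: "is_instance C n A k"
  shows "\<exists>W. inv_ejr C n A k W \<and> EJR_plus n A k W"
proof -
  have fC: "finite C" using inst by (auto simp: is_instance_def)
  define P where "P = {W. inv_ejr C n A k W}"
  have fP: "finite P" unfolding P_def inv_ejr_def using fC
    by (rule rev_finite_subset[OF finite_Pow_iff[THEN iffD2]]) auto
  have "inv_ejr C n A k {}" unfolding inv_ejr_def
    apply (rule conjI, simp)
    apply (rule exI[of _ "\<lambda>i c. 0::real"])
    by simp
  then have "{} \<in> P" unfolding P_def by simp
  then have neP: "P \<noteq> {}" by blast
  obtain W where WP: "W \<in> P" and Wm: "card W = Max (card ` P)"
  proof -
    have "Max (card ` P) \<in> card ` P" using fP neP by (intro Max_in) auto
    then show ?thesis using that by (metis imageE)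
  qed
  have Wmax: "card W' \<le> card W" if "W' \<in> P" for W'
    using Wm fP that by simp
  have fW: "finite W" using WP fC unfolding P_def inv_ejr_def using finite_subset by blast
  have "EJR_plus n A k W"
  proof (rule ccontr)
    assume "\<not> EJR_plus n A k W"
    then have "\<not> (\<forall>l N c. \<not> viol_ejr n A k W l N c)" using ejr_viol by blast
    then obtain l0 N0 c0 where "viol_ejr n A k W l0 N0 c0" by blast
    define L where "L = {l. \<exists>N c. viol_ejr n A k W l N c}"
    have fL: "finite L" unfolding L_def viol_ejr_def by (rule finite_subset[of _ "{1..k}"]) auto
    have "l0 \<in> L" unfolding L_def using \<open>viol_ejr n A k W l0 N0 c0\<close> by blast
    then have "Max L \<in> L" using fL by (intro Max_in) auto
    then obtain N c where v: "viol_ejr n A k W (Max L) N c" unfolding L_def by blast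
    have mx: "\<forall>l' N' d. viol_ejr n A k W l' N' d \<longrightarrow> l' \<le> Max L"
      using fL unfolding L_def by auto
    have "inv_ejr C n A k (insert c W)"
      by (rule ejr_step[OF inst _ v mx]) (use WP P_def in auto)
    then have "card (insert c W) \<le> card W" using Wmax P_def by blast
    moreover have "c \<notin> W" using v unfolding viol_ejr_def by auto
    ultimately show False using fW by simp
  qed
  then show ?thesis using WP P_def by blast
qed




definition viol_fjr :: "'c set \<Rightarrow> nat \<Rightarrow> (nat \<Rightarrow> 'c set) \<Rightarrow> nat \<Rightarrow> 'c set \<Rightarrow> nat \<Rightarrow> 'c set \<Rightarrow> nat set \<Rightarrow> bool" where
  "viol_fjr C n A k W b T S \<longleftrightarrow> b \<ge> 1 \<and> T \<subseteq> C \<and> S \<subseteq> {1..n} \<and> S \<noteq> {} \<and>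
     weakly_cohesive n A k b T S \<and> (\<forall>i\<in>S. card (A i \<inter> W) < b)"

definition inv_fjr :: "'c set \<Rightarrow> nat \<Rightarrow> (nat \<Rightarrow> 'c set) \<Rightarrow> nat \<Rightarrow> 'c set \<Rightarrow> bool" where
  "inv_fjr C n A k W \<longleftrightarrow> W \<subseteq> C \<and> (\<exists>p::nat \<Rightarrow> 'c \<Rightarrow> real. (\<forall>i c. 0 \<le> p i c) \<and>
     (\<forall>i c. p i c \<noteq> 0 \<longrightarrow> i \<in> {1..n} \<and> c \<in> W \<and> A i \<inter> W \<noteq> {}) \<and>
     (\<forall>i. (\<Sum>c\<in>W. p i c) \<le> 1) \<and> (\<forall>c\<in>W. real n / real k \<le> (\<Sum>i\<in>{1..n}. p i c)) \<and>
     (\<forall>i c b T S. p i c \<noteq> 0 \<longrightarrow> viol_fjr C n A k W b T S \<longrightarrow> b \<le> card (A i \<inter> W)))"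

lemma viol_fjr_mono:
  assumes "viol_fjr C n A k W' b T S" "W \<subseteq> W'" "finite W'"
  shows "viol_fjr C n A k W b T S"
proof -
  have "card (A i \<inter> W) \<le> card (A i \<inter> W')" for i
    by (rule card_mono) (use assms(2,3) in auto)
  then show ?thesis using assms(1) unfolding viol_fjr_def by (meson le_less_trans)
qed

lemma fjr_viol:
  assumes "\<forall>b T S. \<not> viol_fjr C n A k W b T S"
  shows "FJR C n A k W"
  unfolding FJR_def
proof (intro allI impI)
  fix b T S assume h: "1 \<le> b \<and> T \<subseteq> C \<and> S \<subseteq> {1..n} \<and> S \<noteq> {} \<and> weakly_cohesive n A k b T S"
  show "\<exists>i\<in>S. b \<le> card (A i \<inter> W)"
  proof (rule ccontr)
    assume H: "\<not> (\<exists>i\<in>S. b \<le> card (A i \<inter> W))"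
    then have h2: "\<forall>i\<in>S. card (A i \<inter> W) < b" by (simp add: not_le)
    then have "viol_fjr C n A k W b T S" unfolding viol_fjr_def using h by simp
    then show False using assms by blast
  qed
qed

lemma fjr_step:
  assumes inst: "is_instance C n A k" and I: "inv_fjr C n A k W" and v: "viol_fjr C n A k W b T S"
    and mx: "\<forall>b' T' S'. viol_fjr C n A k W b' T' S' \<longrightarrow> b' \<le> b"
  shows "inv_fjr C n A k (W \<union> T) \<and> card W < card (W \<union> T)"
proof -
  have fC: "finite C" and k1: "1 \<le> k" using inst by (auto simp: is_instance_def)
  obtain p where WC: "W \<subseteq> C" and nonneg: "\<forall>i c. 0 \<le> p i c"
    and supp: "\<forall>i c. p i c \<noteq> 0 \<longrightarrow> i \<in> {1..n} \<and> c \<in> W \<and> A i \<inter> W \<noteq> {}"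
    and spend: "\<forall>i. (\<Sum>c\<in>W. p i c) \<le> 1" and coll: "\<forall>c\<in>W. real n / real k \<le> (\<Sum>i\<in>{1..n}. p i c)"
    and lev: "\<forall>i c b T S. p i c \<noteq> 0 \<longrightarrow> viol_fjr C n A k W b T S \<longrightarrow> b \<le> card (A i \<inter> W)"
    using I unfolding inv_fjr_def by (elim conjE exE) (rule that; assumption)
  have fW: "finite W" using WC fC finite_subset by blast
  have b1: "1 \<le> b" and TC: "T \<subseteq> C" and SV: "S \<subseteq> {1..n}" and Sne: "S \<noteq> {}"
    and Sc: "real (card T) * real n / real k \<le> real (card S)" and Tb: "\<forall>i\<in>S. b \<le> card (A i \<inter> T)"
    and Sl: "\<forall>i\<in>S. card (A i \<inter> W) < b"
    using v unfolding viol_fjr_def weakly_cohesive_def by auto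
  have fT: "finite T" using TC fC finite_subset by blast
  have fWT: "finite (W \<union> T)" using fW fT by simp
  have fS: "finite S" using SV finite_subset by blast
  have cS: "card S > 0" using fS Sne by (simp add: card_gt_0_iff)
  have AT: "A i \<inter> T \<noteq> {}" if "i \<in> S" for i
  proof
    assume "A i \<inter> T = {}"
    then show False using Tb that b1 by fastforce
  qed
  have p0: "p i d = 0" if "i \<in> S" for i d
  proof (rule ccontr)
    assume "p i d \<noteq> 0"
    then have "b \<le> card (A i \<inter> W)" using lev v by blast
    then show False using Sl that by fastforce
  qed
  have TW: "\<not> T \<subseteq> W"
  proof
    assume "T \<subseteq> W"
    obtain i0 where i0: "i0 \<in> S" using Sne by blast
    have "card (A i0 \<inter> T) \<le> card (A i0 \<inter> W)" by (rule card_mono) (use fW \<open>T \<subseteq> W\<close> in auto)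
    then show False using Tb Sl i0 by fastforce
  qed
  have grow: "card W < card (W \<union> T)"
    by (rule psubset_card_mono) (use fWT TW in auto)
  define q where "q = real n / (real k * real (card S))"
  have q0: "0 \<le> q" unfolding q_def by simp
  have qT: "real (card T) * q \<le> 1"
  proof -
    have "real (card T) * real n \<le> real k * real (card S)" using Sc k1 by (simp add: field_simps)
    then show ?thesis unfolding q_def using k1 cS by (simp add: field_simps)
  qed
  define p' where "p' i d = (if i \<in> S \<and> d \<in> T - W then q else p i d)" for i d
  have s1: "\<forall>i d. 0 \<le> p' i d" unfolding p'_def using nonneg q0 by auto
  have s2: "\<forall>i d. p' i d \<noteq> 0 \<longrightarrow> i \<in> {1..n} \<and> d \<in> W \<union> T \<and> A i \<inter> (W \<union> T) \<noteq> {}"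
  proof (intro allI impI)
    fix i d assume "p' i d \<noteq> 0"
    then show "i \<in> {1..n} \<and> d \<in> W \<union> T \<and> A i \<inter> (W \<union> T) \<noteq> {}"
    proof (cases "i \<in> S \<and> d \<in> T - W")
      case True then show ?thesis using SV AT by blast
    next
      case False then have "p i d \<noteq> 0" using \<open>p' i d \<noteq> 0\<close> unfolding p'_def by presburger
      then show ?thesis using supp by blast
    qed
  qed
  have s3: "\<forall>i. (\<Sum>d\<in>W \<union> T. p' i d) \<le> 1"
  proof
    fix i
    show "(\<Sum>d\<in>W \<union> T. p' i d) \<le> 1"
    proof (cases "i \<in> S")
      case False
      have "(\<Sum>d\<in>W \<union> T. p' i d) = (\<Sum>d\<in>W \<union> T. p i d)" by (simp add: p'_def False)
      also have "\<dots> = (\<Sum>d\<in>W. p i d)"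
        by (rule sum.mono_neutral_right) (use fWT supp in auto)
      finally show ?thesis using spend by simp
    next
      case True
      have "(\<Sum>d\<in>W \<union> T. p' i d) = (\<Sum>d\<in>W \<union> T. if d \<in> T - W then q else 0)"
        by (rule sum.cong) (auto simp: p'_def True p0)
      also have "\<dots> = (\<Sum>d\<in>T - W. q)"
      proof -
        have "(\<Sum>d\<in>W \<union> T. if d \<in> T - W then q else 0) = (\<Sum>d\<in>(W \<union> T) \<inter> (T - W). q)"
          by (rule sum.inter_restrict[OF fWT, symmetric])
        also have "(W \<union> T) \<inter> (T - W) = T - W" by blast
        finally show ?thesis .
      qed
      also have "\<dots> = real (card (T - W)) * q" by simp
      also have "\<dots> \<le> real (card T) * q"
        using q0 card_mono[OF fT, of "T - W"] by (simp add: mult_right_mono)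
      finally show ?thesis using qT by simp
    qed
  qed
  have ge: "p i d \<le> p' i d" for i d unfolding p'_def using q0 p0 by auto
  have s4: "\<forall>d\<in>W \<union> T. real n / real k \<le> (\<Sum>i\<in>{1..n}. p' i d)"
  proof
    fix d assume d: "d \<in> W \<union> T"
    show "real n / real k \<le> (\<Sum>i\<in>{1..n}. p' i d)"
    proof (cases "d \<in> W")
      case True
      have "(\<Sum>i\<in>{1..n}. p i d) \<le> (\<Sum>i\<in>{1..n}. p' i d)" by (rule sum_mono) (rule ge)
      then show ?thesis using coll True by fastforce
    next
      case False
      then have dT: "d \<in> T - W" using d by simp
      have "real n / real k = (\<Sum>i\<in>S. q)" unfolding q_def using cS by simp
      also have "\<dots> = (\<Sum>i\<in>{1..n}. if i \<in> S then q else 0)"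
        by (subst sum.If_cases) (use SV in \<open>auto simp: Int_absorb1\<close>)
      also have "\<dots> \<le> (\<Sum>i\<in>{1..n}. p' i d)"
        by (rule sum_mono) (use dT in \<open>auto simp: p'_def nonneg\<close>)
      finally show ?thesis .
    qed
  qed
  have s5: "\<forall>i d b' T' S'. p' i d \<noteq> 0 \<longrightarrow> viol_fjr C n A k (W \<union> T) b' T' S' \<longrightarrow> b' \<le> card (A i \<inter> (W \<union> T))"
  proof (intro allI impI)
    fix i d b' T' S' assume nz: "p' i d \<noteq> 0" and vv: "viol_fjr C n A k (W \<union> T) b' T' S'"
    have v': "viol_fjr C n A k W b' T' S'" by (rule viol_fjr_mono[OF vv _ fWT]) simp
    then have bb: "b' \<le> b" using mx by blast
    have m1: "card (A i \<inter> W) \<le> card (A i \<inter> (W \<union> T))" by (rule card_mono) (use fWT in auto)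
    have m2: "card (A i \<inter> T) \<le> card (A i \<inter> (W \<union> T))" by (rule card_mono) (use fWT in auto)
    show "b' \<le> card (A i \<inter> (W \<union> T))"
    proof (cases "i \<in> S \<and> d \<in> T - W")
      case True
      then show ?thesis using bb Tb m2 by fastforce
    next
      case False
      then have "p i d \<noteq> 0" using nz unfolding p'_def by presburger
      then have "b' \<le> card (A i \<inter> W)" using lev v' by blast
      then show ?thesis using m1 by simp
    qed
  qed
  have "W \<union> T \<subseteq> C" using WC TC by blast
  then have "inv_fjr C n A k (W \<union> T)" unfolding inv_fjr_def
    apply (intro conjI)
     apply assumption
    apply (rule exI[of _ p'])
    by (rule conjI[OF s1 conjI[OF s2 conjI[OF s3 conjI[OF s4 s5]]]])
  then show ?thesis using grow by simp
qed

lemma fjr_exists: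
  assumes inst: "is_instance C n A k"
  shows "\<exists>W. inv_fjr C n A k W \<and> FJR C n A k W"
proof -
  have fC: "finite C" using inst by (auto simp: is_instance_def)
  define P where "P = {W. inv_fjr C n A k W}"
  have fP: "finite P" unfolding P_def inv_fjr_def using fC
    by (rule rev_finite_subset[OF finite_Pow_iff[THEN iffD2]]) auto
  have "inv_fjr C n A k {}" unfolding inv_fjr_def
    apply (rule conjI, simp)
    apply (rule exI[of _ "\<lambda>i c. 0::real"])
    by simp
  then have "{} \<in> P" unfolding P_def by simp
  then have neP: "P \<noteq> {}" by blast
  obtain W where WP: "W \<in> P" and Wm: "card W = Max (card ` P)"
  proof -
    have "Max (card ` P) \<in> card ` P" using fP neP by (intro Max_in) auto
    then show ?thesis using that by (metis imageE)
  qed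
  have Wmax: "card W' \<le> card W" if "W' \<in> P" for W'
    using Wm fP that by simp
  have "FJR C n A k W"
  proof (rule ccontr)
    assume "\<not> FJR C n A k W"
    then have "\<not> (\<forall>b T S. \<not> viol_fjr C n A k W b T S)" using fjr_viol by blast
    then obtain b0 T0 S0 where v0: "viol_fjr C n A k W b0 T0 S0" by blast
    define L where "L = {b. \<exists>T S. viol_fjr C n A k W b T S}"
    have "L \<subseteq> {0..card C}"
    proof
      fix b assume "b \<in> L"
      then obtain T S where vv: "viol_fjr C n A k W b T S" unfolding L_def by blast
      then obtain i where i: "i \<in> S" unfolding viol_fjr_def by blast
      have "b \<le> card (A i \<inter> T)" using vv i unfolding viol_fjr_def weakly_cohesive_def by blast
      also have "\<dots> \<le> card C" by (rule card_mono[OF fC]) (use vv in \<open>auto simp: viol_fjr_def\<close>)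
      finally show "b \<in> {0..card C}" by simp
    qed
    then have fL: "finite L" using finite_subset by blast
    have "b0 \<in> L" unfolding L_def using v0 by blast
    then have "Max L \<in> L" using fL by (intro Max_in) auto
    then obtain T S where v: "viol_fjr C n A k W (Max L) T S" unfolding L_def by blast
    have mx: "\<forall>b' T' S'. viol_fjr C n A k W b' T' S' \<longrightarrow> b' \<le> Max L"
      using fL unfolding L_def by auto
    have "inv_fjr C n A k (W \<union> T) \<and> card W < card (W \<union> T)"
      by (rule fjr_step[OF inst _ v mx]) (use WP P_def in auto)
    then show False using Wmax P_def by fastforce
  qed
  then show ?thesis using WP P_def by blast
qed



lemma EJR_mono:
  assumes E: "EJR_plus n A k W" and sub: "W \<subseteq> W'" and fin: "finite W'"
  shows "EJR_plus n A k W'"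
  unfolding EJR_plus_def
proof (intro ballI allI impI)
  fix l N assume l: "l \<in> {1..k}" and h: "N \<subseteq> {1..n} \<and> N \<noteq> {} \<and>
        real (card N) \<ge> real l * real n / real k \<and> (\<Inter>i\<in>N. A i) \<noteq> {}"
  have m: "card (A i \<inter> W) \<le> card (A i \<inter> W')" for i
    by (rule card_mono) (use sub fin in auto)
  have "(\<exists>i\<in>N. card (A i \<inter> W) \<ge> l) \<or> (\<Inter>i\<in>N. A i) \<subseteq> W"
    using E[unfolded EJR_plus_def, rule_format, OF l h] .
  then show "(\<exists>i\<in>N. card (A i \<inter> W') \<ge> l) \<or> (\<Inter>i\<in>N. A i) \<subseteq> W'"
  proof
    assume "\<exists>i\<in>N. card (A i \<inter> W) \<ge> l"
    then obtain i where "i \<in> N" "card (A i \<inter> W) \<ge> l" by blast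
    then have "card (A i \<inter> W') \<ge> l" using m[of i] by linarith
    then show ?thesis using \<open>i \<in> N\<close> by blast
  next
    assume "(\<Inter>i\<in>N. A i) \<subseteq> W"
    then show ?thesis using sub by (intro disjI2) (rule subset_trans)
  qed
qed

lemma FJR_mono:
  assumes E: "FJR C n A k W" and sub: "W \<subseteq> W'" and fin: "finite W'"
  shows "FJR C n A k W'"
  unfolding FJR_def
proof (intro allI impI)
  fix b T S assume h: "1 \<le> b \<and> T \<subseteq> C \<and> S \<subseteq> {1..n} \<and> S \<noteq> {} \<and> weakly_cohesive n A k b T S"
  have m: "card (A i \<inter> W) \<le> card (A i \<inter> W')" for i
    by (rule card_mono) (use sub fin in auto)
  have "\<exists>i\<in>S. b \<le> card (A i \<inter> W)" using E[unfolded FJR_def, rule_format, OF h] .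
  then obtain i where "i \<in> S" "b \<le> card (A i \<inter> W)" by blast
  then show "\<exists>i\<in>S. b \<le> card (A i \<inter> W')" using m[of i] le_trans by blast
qed

lemma get_ejr:
  assumes inst: "is_instance C n A k"
  shows "\<exists>W. is_committee C k W \<and> rep_ratio C n A k W \<ge> 3/4 \<and> EJR_plus n A k W"
proof (cases "n = 0")
  case True
  obtain W' where W': "is_committee C k W'" "rep_ratio C n A k W' \<ge> 3/4"
    using extend[OF inst, of "{}"] by auto
  have "{1..n} = ({}::nat set)" using True by simp
  then have "EJR_plus n A k W'" unfolding EJR_plus_def by blast
  then show ?thesis using W' by blast
next
  case False
  have fC: "finite C" and k1: "1 \<le> k" using inst by (auto simp: is_instance_def)
  obtain W where I: "inv_ejr C n A k W" and E: "EJR_plus n A k W" using ejr_exists[OF inst] by blast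
  obtain p where WC: "W \<subseteq> C" and nonneg: "\<forall>i c. 0 \<le> p i c"
    and supp: "\<forall>i c. p i c \<noteq> 0 \<longrightarrow> i \<in> {1..n} \<and> c \<in> W \<and> c \<in> A i"
    and spend: "\<forall>i. (\<Sum>c\<in>W. p i c) \<le> 1" and coll: "\<forall>c\<in>W. real n / real k \<le> (\<Sum>i\<in>{1..n}. p i c)"
    using I unfolding inv_ejr_def by (elim conjE exE) (rule that; assumption)
  have fW: "finite W" using WC fC finite_subset by blast
  have supp': "\<forall>i c. p i c \<noteq> 0 \<longrightarrow> i \<in> {1..n} \<and> c \<in> W \<and> A i \<inter> W \<noteq> {}" using supp by blast
  have pb: "real (card W) * real n \<le> real k * real (cov n A W)"
    by (rule pay_bound[OF fW _ nonneg supp' spend coll]) (use k1 in simp)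
  also have "\<dots> \<le> real k * real n" using cov_le[of n A W] by (simp add: mult_left_mono)
  finally have "card W \<le> k" using False by simp
  then obtain W' where W': "W \<subseteq> W'" "is_committee C k W'" "rep_ratio C n A k W' \<ge> 3/4"
    using extend[OF inst WC _ pb] by blast
  have "finite W'" using W'(2) fC unfolding is_committee_def using finite_subset by blast
  then have "EJR_plus n A k W'" using EJR_mono[OF E W'(1)] by blast
  then show ?thesis using W' by blast
qed

lemma get_fjr:
  assumes inst: "is_instance C n A k"
  shows "\<exists>W. is_committee C k W \<and> rep_ratio C n A k W \<ge> 3/4 \<and> FJR C n A k W"
proof (cases "n = 0")
  case True
  obtain W' where W': "is_committee C k W'" "rep_ratio C n A k W' \<ge> 3/4"
    using extend[OF inst, of "{}"] by auto
  have "{1..n} = ({}::nat set)" using True by simp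
  then have "FJR C n A k W'" unfolding FJR_def by blast
  then show ?thesis using W' by blast
next
  case False
  have fC: "finite C" and k1: "1 \<le> k" using inst by (auto simp: is_instance_def)
  obtain W where I: "inv_fjr C n A k W" and E: "FJR C n A k W" using fjr_exists[OF inst] by blast
  obtain p where WC: "W \<subseteq> C" and nonneg: "\<forall>i c. 0 \<le> p i c"
    and supp: "\<forall>i c. p i c \<noteq> 0 \<longrightarrow> i \<in> {1..n} \<and> c \<in> W \<and> A i \<inter> W \<noteq> {}"
    and spend: "\<forall>i. (\<Sum>c\<in>W. p i c) \<le> 1" and coll: "\<forall>c\<in>W. real n / real k \<le> (\<Sum>i\<in>{1..n}. p i c)"
    using I unfolding inv_fjr_def by (elim conjE exE) (rule that; assumption)
  have fW: "finite W" using WC fC finite_subset by blast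
  have pb: "real (card W) * real n \<le> real k * real (cov n A W)"
    by (rule pay_bound[OF fW _ nonneg supp spend coll]) (use k1 in simp)
  also have "\<dots> \<le> real k * real n" using cov_le[of n A W] by (simp add: mult_left_mono)
  finally have "card W \<le> k" using False by simp
  then obtain W' where W': "W \<subseteq> W'" "is_committee C k W'" "rep_ratio C n A k W' \<ge> 3/4"
    using extend[OF inst WC _ pb] by blast
  have "finite W'" using W'(2) fC unfolding is_committee_def using finite_subset by blast
  then have "FJR C n A k W'" using FJR_mono[OF E W'(1)] by blast
  then show ?thesis using W' by blast
qed

theorem corollary4:
  fixes C :: "'c set" and n :: nat and A :: "nat \<Rightarrow> 'c set" and k :: nat
  assumes "is_instance C n A k"
  shows "\<exists>W W'. is_committee C k W \<and> rep_ratio C n A k W \<ge> 3/4 \<and> EJR_plus n A k W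
              \<and> is_committee C k W' \<and> rep_ratio C n A k W' \<ge> 3/4 \<and> FJR C n A k W'"
  using get_ejr[OF assms] get_fjr[OF assms] by blast


end
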